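(* Let $G$ be an $m\times n$ XOR non-local game with no zero rows, with marginal row biases $c_1,\dots,c_m$. A vector strategy $\{u_i\},\{v_j\}$ for $G$ is optimal if and only if $\sum_jG_{ij}v_j=c_iu_i$ for all $1\le i\le m$.
   Context: An $m\times n$ XOR non-local game has real cost matrix $G$ with $\sum|G_{ij}|=1$. A vector strategy is a pair of families of unit vectors $u_1,\dots,u_m$, $v_1,\dots,v_n$ in some $\mathbb{R}^N$, with bias $\sum G_{ij}u_i\cdot v_j$; the maximum bias is the quantum success bias $\varepsilon_q(G)$, and a vector strategy is optimal if it attains it. The $i$-th marginal row bias $c_i\ge0$ is the common value of $\sum_jG_{ij}u_i\cdot v_j$ over all optimal vector strategies (this value does not depend on the optimal strategy). *)

theory Defs
  imports "HOL-Analysis.Analysis"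
begin

definition xor_game :: "nat \<Rightarrow> nat \<Rightarrow> (nat \<Rightarrow> nat \<Rightarrow> real) \<Rightarrow> bool" where
  "xor_game m n G \<longleftrightarrow> (\<Sum>i<m. \<Sum>j<n. \<bar>G i j\<bar>) = 1"

definition no_zero_rows :: "nat \<Rightarrow> nat \<Rightarrow> (nat \<Rightarrow> nat \<Rightarrow> real) \<Rightarrow> bool" where
  "no_zero_rows m n G \<longleftrightarrow> (\<forall>i<m. \<exists>j<n. G i j \<noteq> 0)"

definition vec_strategy :: "nat \<Rightarrow> nat \<Rightarrow> (nat \<Rightarrow> 'a::real_inner) \<Rightarrow> (nat \<Rightarrow> 'a) \<Rightarrow> bool" where
  "vec_strategy m n u v \<longleftrightarrow> (\<forall>i<m. norm (u i) = 1) \<and> (\<forall>j<n. norm (v j) = 1)"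

definition bias :: "nat \<Rightarrow> nat \<Rightarrow> (nat \<Rightarrow> nat \<Rightarrow> real) \<Rightarrow> (nat \<Rightarrow> 'a::real_inner) \<Rightarrow> (nat \<Rightarrow> 'a) \<Rightarrow> real" where
  "bias m n G u v = (\<Sum>i<m. \<Sum>j<n. G i j * (u i \<bullet> v j))"

text \<open>Coordinate model of R^N for arbitrary N: vectors are functions nat \<Rightarrow> real,
  only coordinates k < N matter.\<close>
definition dinner :: "nat \<Rightarrow> (nat \<Rightarrow> real) \<Rightarrow> (nat \<Rightarrow> real) \<Rightarrow> real" where
  "dinner N x y = (\<Sum>k<N. x k * y k)"

definition coord_strategy :: "nat \<Rightarrow> nat \<Rightarrow> nat \<Rightarrow> (nat \<Rightarrow> nat \<Rightarrow> real) \<Rightarrow> (nat \<Rightarrow> nat \<Rightarrow> real) \<Rightarrow> bool" where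
  "coord_strategy N m n u v \<longleftrightarrow> (\<forall>i<m. dinner N (u i) (u i) = 1) \<and> (\<forall>j<n. dinner N (v j) (v j) = 1)"

definition coord_bias :: "nat \<Rightarrow> nat \<Rightarrow> nat \<Rightarrow> (nat \<Rightarrow> nat \<Rightarrow> real) \<Rightarrow> (nat \<Rightarrow> nat \<Rightarrow> real) \<Rightarrow> (nat \<Rightarrow> nat \<Rightarrow> real) \<Rightarrow> real" where
  "coord_bias N m n G u v = (\<Sum>i<m. \<Sum>j<n. G i j * dinner N (u i) (v j))"

definition quantum_bias :: "nat \<Rightarrow> nat \<Rightarrow> (nat \<Rightarrow> nat \<Rightarrow> real) \<Rightarrow> real" where
  "quantum_bias m n G = Sup {coord_bias N m n G u v | N u v. coord_strategy N m n u v}"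

definition optimal_strategy :: "nat \<Rightarrow> nat \<Rightarrow> (nat \<Rightarrow> nat \<Rightarrow> real) \<Rightarrow> (nat \<Rightarrow> 'a::real_inner) \<Rightarrow> (nat \<Rightarrow> 'a) \<Rightarrow> bool" where
  "optimal_strategy m n G u v \<longleftrightarrow> vec_strategy m n u v \<and> bias m n G u v = quantum_bias m n G"

text \<open>Marginal row bias c_i: the value of sum_j G_ij u_i.v_j for an optimal strategy
  (the paper shows it does not depend on the optimal strategy chosen).\<close>
definition marginal_row_bias :: "nat \<Rightarrow> nat \<Rightarrow> (nat \<Rightarrow> nat \<Rightarrow> real) \<Rightarrow> nat \<Rightarrow> real" where
  "marginal_row_bias m n G i = (SOME c. \<exists>N u v. coord_strategy N m n u v \<and>
      coord_bias N m n G u v = quantum_bias m n G \<and> c = (\<Sum>j<n. G i j * dinner N (u i) (v j)))"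

end

theory Submission
  imports Defs
begin


lemma dinner_comm: "dinner N x y = dinner N y x"
  by (simp add: dinner_def mult.commute)

lemma dinner_add_left: "dinner N (\<lambda>k. x k + y k) z = dinner N x z + dinner N y z"
  by (simp add: dinner_def sum.distrib algebra_simps)

lemma dinner_diff_left: "dinner N (\<lambda>k. x k - y k) z = dinner N x z - dinner N y z"
  by (simp add: dinner_def sum_subtractf algebra_simps)

lemma dinner_scale_left: "dinner N (\<lambda>k. c * x k) z = c * dinner N x z"
  by (simp add: dinner_def sum_distrib_left algebra_simps)

lemma dinner_sum_left: "dinner N (\<lambda>k. \<Sum>j\<in>J. f j k) z = (\<Sum>j\<in>J. dinner N (f j) z)"
  by (simp add: dinner_def sum_distrib_right sum.swap[of _ J])

lemma dinner_self_nonneg: "0 \<le> dinner N x x"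
  by (simp add: dinner_def sum_nonneg)

lemma dinner_abs_le: "\<bar>dinner N x y\<bar> \<le> (dinner N x x + dinner N y y) / 2"
proof -
  have "\<bar>dinner N x y\<bar> \<le> (\<Sum>k<N. \<bar>x k * y k\<bar>)" unfolding dinner_def by (rule sum_abs)
  also have "\<dots> \<le> (\<Sum>k<N. (x k * x k + y k * y k) / 2)"
  proof (rule sum_mono)
    fix k
    have "0 \<le> (\<bar>x k\<bar> - \<bar>y k\<bar>)^2" by simp
    then show "\<bar>x k * y k\<bar> \<le> (x k * x k + y k * y k) / 2"
      by (simp add: power2_eq_square abs_mult algebra_simps)
  qed
  also have "\<dots> = (dinner N x x + dinner N y y) / 2"
    by (simp add: dinner_def sum.distrib flip: sum_divide_distrib)
  finally show ?thesis .
qed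

definition strat_set where
  "strat_set m n G = {coord_bias N m n G u v | N u v. coord_strategy N m n u v}"

lemma quantum_bias_eq: "quantum_bias m n G = Sup (strat_set m n G)"
  by (simp add: quantum_bias_def strat_set_def)

lemma coord_bias_le:
  assumes "coord_strategy N m n u v"
  shows "coord_bias N m n G u v \<le> (\<Sum>i<m. \<Sum>j<n. \<bar>G i j\<bar>)"
proof -
  have "coord_bias N m n G u v \<le> (\<Sum>i<m. \<Sum>j<n. \<bar>G i j * dinner N (u i) (v j)\<bar>)"
    unfolding coord_bias_def
    by (rule order_trans[OF abs_ge_self], rule order_trans[OF sum_abs], rule sum_mono, rule sum_abs)
  also have "\<dots> \<le> (\<Sum>i<m. \<Sum>j<n. \<bar>G i j\<bar>)"
  proof (intro sum_mono)
    fix i j assume "i \<in> {..<m}" "j \<in> {..<n}"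
    then have "\<bar>dinner N (u i) (v j)\<bar> \<le> 1"
      using dinner_abs_le[of N "u i" "v j"] assms by (simp add: coord_strategy_def)
    then show "\<bar>G i j * dinner N (u i) (v j)\<bar> \<le> \<bar>G i j\<bar>"
      by (simp add: abs_mult mult_left_le)
  qed
  finally show ?thesis .
qed

lemma strat_set_bdd: "bdd_above (strat_set m n G)"
  unfolding strat_set_def bdd_above_def using coord_bias_le by blast

lemma strat_set_ne: "strat_set m n G \<noteq> {}"
proof -
  have "coord_strategy 1 m n (\<lambda>_ _. 1) (\<lambda>_ _. 1)" by (simp add: coord_strategy_def dinner_def)
  then show ?thesis unfolding strat_set_def by blast
qed

lemma le_quantum_bias:
  assumes "coord_strategy N m n u v"
  shows "coord_bias N m n G u v \<le> quantum_bias m n G"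
  unfolding quantum_bias_eq
  by (rule cSup_upper[OF _ strat_set_bdd]) (use assms in \<open>auto simp: strat_set_def\<close>)


lemma dinner_Suc: "dinner (Suc K) x y = x 0 * y 0 + dinner K (\<lambda>k. x (Suc k)) (\<lambda>k. y (Suc k))"
  unfolding dinner_def by (rule sum.lessThan_Suc_shift)

lemma dinner_zero_left:
  assumes "dinner N z z = 0" shows "dinner N z w = 0"
proof -
  have "\<forall>k\<in>{..<N}. z k * z k = 0"
    using assms by (subst sum_nonneg_eq_0_iff[symmetric]) (auto simp: dinner_def)
  then show ?thesis by (simp add: dinner_def)
qed

lemma dinner_proj:
  assumes ee: "c1 * c2 * dinner N e e = c1 * c2"
    and c1: "dinner N x1 e = c1" and c2: "dinner N x2 e = c2"
  shows "dinner N (\<lambda>k. x1 k - c1 * e k) (\<lambda>k. x2 k - c2 * e k) = dinner N x1 x2 - c1 * c2"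
proof -
  have "dinner N (\<lambda>k. x1 k - c1 * e k) (\<lambda>k. x2 k - c2 * e k)
      = dinner N x1 x2 - c2 * dinner N x1 e - c1 * dinner N e x2 + c1 * c2 * dinner N e e"
    by (simp add: dinner_def sum_subtractf sum.distrib sum_distrib_left algebra_simps)
  then show ?thesis using ee c1 c2 dinner_comm[of N e x2] by simp
qed

lemma realize:
  "\<exists>y. \<forall>a<K. \<forall>b<K. dinner K (y a) (y b) = dinner N (x a) (x b)"
proof (induction K arbitrary: x)
  case 0 then show ?case by simp
next
  case (Suc K)
  define s where "s = sqrt (dinner N (x 0) (x 0))"
  define e where "e = (\<lambda>k. x 0 k / s)"
  define c where "c = (\<lambda>a. dinner N (x a) e)"
  have ss: "s * s = dinner N (x 0) (x 0)" unfolding s_def using dinner_self_nonneg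
    by (simp add: real_sqrt_mult_self)
  have ee: "c a * c b * dinner N e e = c a * c b" for a b
  proof (cases "s = 0")
    case True then show ?thesis by (simp add: c_def e_def dinner_def)
  next
    case False
    have "dinner N e e = dinner N (x 0) (x 0) / (s * s)"
      by (simp add: e_def dinner_def sum_divide_distrib)
    then have "dinner N e e = 1" using False by (simp flip: ss)
    then show ?thesis by simp
  qed
  have c0: "c 0 = s"
  proof (cases "s = 0")
    case True then show ?thesis by (simp add: c_def e_def dinner_def)
  next
    case False
    have "c 0 = dinner N (x 0) (x 0) / s"
      by (simp add: c_def e_def dinner_def sum_divide_distrib)
    then show ?thesis using False by (simp flip: ss)
  qed
  have proj: "dinner N (\<lambda>k. x a k - c a * e k) (\<lambda>k. x b k - c b * e k) = dinner N (x a) (x b) - c a * c b" for a b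
    by (rule dinner_proj[OF ee]) (simp_all add: c_def)
  have z0: "dinner N (\<lambda>k. x 0 k - c 0 * e k) w = 0" for w
    by (rule dinner_zero_left) (use proj[of 0 0] c0 ss in simp)
  define x' where "x' = (\<lambda>a k. x (Suc a) k - c (Suc a) * e k)"
  obtain y' where y': "\<And>a b. a < K \<Longrightarrow> b < K \<Longrightarrow> dinner K (y' a) (y' b) = dinner N (x' a) (x' b)"
    using Suc.IH by blast
  define y where "y = (\<lambda>a k. if k = 0 then c a else if a = 0 then 0 else y' (a - 1) (k - 1))"
  have "dinner (Suc K) (y a) (y b) = dinner N (x a) (x b)" if "a < Suc K" "b < Suc K" for a b
  proof -
    have "dinner (Suc K) (y a) (y b) = c a * c b
        + dinner K (\<lambda>k. y a (Suc k)) (\<lambda>k. y b (Suc k))"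
      by (simp add: dinner_Suc y_def)
    also have "\<dots> = dinner N (x a) (x b)"
    proof (cases "a = 0 \<or> b = 0")
      case True
      then have "dinner K (\<lambda>k. y a (Suc k)) (\<lambda>k. y b (Suc k)) = 0"
        by (auto simp: y_def dinner_def)
      moreover have "dinner N (x a) (x b) = c a * c b"
      proof (cases "a = 0")
        case True
        then show ?thesis using proj[of a b] z0 by simp
      next
        case False
        then have "b = 0" using \<open>a = 0 \<or> b = 0\<close> by simp
        then show ?thesis using proj[of a b] z0 dinner_comm[of N "\<lambda>k. x a k - c a * e k"] by simp
      qed
      ultimately show ?thesis by simp
    next
      case False
      then obtain a' b' where ab: "a = Suc a'" "b = Suc b'" by (metis not0_implies_Suc)
      have "dinner K (\<lambda>k. y a (Suc k)) (\<lambda>k. y b (Suc k)) = dinner K (y' a') (y' b')"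
        using ab by (simp add: y_def)
      also have "\<dots> = dinner N (x' a') (x' b')" using y' that ab by simp
      also have "\<dots> = dinner N (x a) (x b) - c a * c b"
        unfolding x'_def ab by (rule proj)
      finally show ?thesis by simp
    qed
    finally show ?thesis .
  qed
  then show ?case by blast
qed


lemma dinner_cong:
  "(\<And>k. k < N \<Longrightarrow> x k = x' k) \<Longrightarrow> (\<And>k. k < N \<Longrightarrow> y k = y' k) \<Longrightarrow> dinner N x y = dinner N x' y'"
  by (simp add: dinner_def)

lemma coord_le_dinner: "k < N \<Longrightarrow> x k * x k \<le> dinner N x x"
  unfolding dinner_def by (rule member_le_sum) auto

definition box_set :: "nat \<Rightarrow> (nat \<times> nat \<Rightarrow> real) set" where
  "box_set D = PiE UNIV (\<lambda>(a,k). if a < D \<and> k < D then {-1..1} else {0})"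

definition Tset :: "nat \<Rightarrow> (nat \<times> nat \<Rightarrow> real) set" where
  "Tset D = box_set D \<inter> (\<Inter>a\<in>{..<D}. {z. dinner D (\<lambda>k. z (a,k)) (\<lambda>k. z (a,k)) = 1})"

lemma compact_box_set: "compact (box_set D)"
proof -
  have "compactin (product_topology (\<lambda>i. euclidean) UNIV) (box_set D)"
    unfolding box_set_def compactin_PiE by (auto split: if_splits)
  then show ?thesis by (simp add: euclidean_product_topology)
qed

lemma cont_dinner_z:
  "continuous_on UNIV (\<lambda>z::nat\<times>nat\<Rightarrow>real. dinner D (\<lambda>k. z (a,k)) (\<lambda>k. z (b,k)))"
  unfolding dinner_def by (intro continuous_intros continuous_on_product_coordinates)

lemma compact_Tset: "compact (Tset D)"
  unfolding Tset_def
  by (intro compact_Int_closed compact_box_set closed_INT ballI closed_Collect_eq cont_dinner_z continuous_on_const)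

definition uz where "uz z = (\<lambda>i k. z (i,k))"
definition vz where "vz m z = (\<lambda>j k. z (m + j,k))"

lemma attain:
  "\<exists>N u v. coord_strategy N m n u v \<and> coord_bias N m n G u v = quantum_bias m n G"
proof -
  define D where "D = m + n"
  define F where "F = (\<lambda>z. coord_bias D m n G (uz z) (vz m z))"
  have z0: "(\<lambda>(a,k). if a < D \<and> k = 0 then 1 else 0::real) \<in> Tset D"
  proof -
    have "(\<Sum>k<D. (if k = 0 then 1 else 0) * (if k = 0 then 1 else 0::real)) = (\<Sum>k<D. if k = 0 then 1 else 0)"
      by (rule sum.cong) auto
    then show ?thesis by (auto simp: Tset_def box_set_def dinner_def)
  qed
  have contF: "continuous_on (Tset D) F"
    unfolding F_def coord_bias_def uz_def vz_def dinner_def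
    by (intro continuous_intros continuous_on_subset[OF continuous_on_product_coordinates] subset_UNIV)
  obtain zs where zs: "zs \<in> Tset D" and zmax: "\<And>z. z \<in> Tset D \<Longrightarrow> F z \<le> F zs"
    using continuous_attains_sup[OF compact_Tset _ contF] z0 by blast
  have strT: "coord_strategy D m n (uz z) (vz m z)" if "z \<in> Tset D" for z
    using that by (auto simp: coord_strategy_def Tset_def uz_def vz_def D_def)
  have "s \<le> F zs" if sS: "s \<in> strat_set m n G" for s
  proof -
    obtain N u v where s: "s = coord_bias N m n G u v" and st: "coord_strategy N m n u v"
      using sS by (auto simp: strat_set_def)
    define x where "x = (\<lambda>a. if a < m then u a else v (a - m))"
    obtain y where y: "\<And>a b. a < D \<Longrightarrow> b < D \<Longrightarrow> dinner D (y a) (y b) = dinner N (x a) (x b)"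
      using realize[of D N x] by blast
    define z where "z = (\<lambda>(a,k). if a < D \<and> k < D then y a k else 0)"
    have yy: "a < D \<Longrightarrow> dinner D (y a) (y a) = 1" for a
      using y[of a a] st by (auto simp: x_def coord_strategy_def D_def)
    have dz: "a < D \<Longrightarrow> b < D \<Longrightarrow> dinner D (\<lambda>k. z (a,k)) (\<lambda>k. z (b,k)) = dinner D (y a) (y b)" for a b
      by (rule dinner_cong) (auto simp: z_def)
    have "z \<in> box_set D"
    proof -
      have "\<bar>y a k\<bar> \<le> 1" if "a < D" "k < D" for a k
        using coord_le_dinner[of k D "y a"] yy[of a] that
        by (metis abs_square_le_1 power2_eq_square)
      then show ?thesis by (force simp: box_set_def z_def abs_le_iff)
    qed
    then have zT: "z \<in> Tset D" using dz yy by (auto simp: Tset_def)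
    have "F z = s"
      unfolding F_def s coord_bias_def
    proof (intro sum.cong refl)
      fix i j assume ij: "i \<in> {..<m}" "j \<in> {..<n}"
      have "dinner D (uz z i) (vz m z j) = dinner D (y i) (y (m + j))"
        unfolding uz_def vz_def using dz[of i "m+j"] ij by (simp add: D_def)
      also have "\<dots> = dinner N (u i) (v j)" using y[of i "m+j"] ij by (simp add: D_def x_def)
      finally show "G i j * dinner D (uz z i) (vz m z j) = G i j * dinner N (u i) (v j)" by simp
    qed
    then show ?thesis using zmax[OF zT] by simp
  qed
  then have "quantum_bias m n G \<le> F zs"
    unfolding quantum_bias_eq by (rule cSup_least[OF strat_set_ne])
  moreover have "F zs \<le> quantum_bias m n G"
    unfolding F_def by (rule le_quantum_bias[OF strT[OF zs]])
  ultimately show ?thesis using strT[OF zs] unfolding F_def by (intro exI[of _ D]) auto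
qed




definition Wc where "Wc N n G u v i = (\<Sum>j<n. G i j * dinner N (u i) (v j))"
definition Qc where "Qc N n G v i = (\<Sum>j<n. \<Sum>l<n. G i j * G i l * dinner N (v j) (v l))"

lemma dinner_sum_right: "dinner N x (\<lambda>k. \<Sum>j\<in>J. g j * y j k) = (\<Sum>j\<in>J. g j * dinner N x (y j))"
  by (simp add: dinner_def sum_distrib_left sum.swap[of _ J] algebra_simps)

lemma sum_update:
  fixes f :: "(nat \<Rightarrow> real) \<Rightarrow> nat \<Rightarrow> real" and m :: nat
  assumes "i < m"
  shows "(\<Sum>i'<m. f ((u(i := z)) i') i') = (\<Sum>i'<m. f (u i') i') - f (u i) i + f z i"
proof -
  have A: "(\<Sum>i'<m. g i') = g i + (\<Sum>i'\<in>{..<m} - {i}. g i')" for g :: "nat \<Rightarrow> real"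
    using assms by (intro sum.remove) auto
  have "(\<Sum>i'\<in>{..<m} - {i}. f ((u(i := z)) i') i') = (\<Sum>i'\<in>{..<m} - {i}. f (u i') i')"
    by (rule sum.cong) auto
  then show ?thesis using A[of "\<lambda>i'. f ((u(i := z)) i') i'"] A[of "\<lambda>i'. f (u i') i'"] by simp
qed

lemma opt_WQ:
  assumes st: "coord_strategy N m n u v" and opt: "coord_bias N m n G u v = quantum_bias m n G"
    and i: "i < m"
  shows "0 \<le> Wc N n G u v i \<and> Wc N n G u v i * Wc N n G u v i = Qc N n G v i"
proof -
  define W where "W = Wc N n G u v i"
  define Q where "Q = Qc N n G v i"
  define w where "w = (\<lambda>k. \<Sum>j<n. G i j * v j k)"
  have uw: "dinner N (u i) w = W" unfolding w_def W_def Wc_def by (rule dinner_sum_right)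
  have wx: "dinner N w x = (\<Sum>j<n. G i j * dinner N (v j) x)" for x
    by (subst dinner_comm) (simp add: w_def dinner_sum_right dinner_comm)
  have ww: "dinner N w w = Q"
    unfolding wx Q_def Qc_def by (simp add: w_def dinner_sum_right sum_distrib_left mult.assoc)
  have uu: "dinner N (u i) (u i) = 1" using st i by (simp add: coord_strategy_def)
  have "dinner N (\<lambda>k. w k - W * u i k) (\<lambda>k. w k - W * u i k) = Q - W * W"
    using dinner_proj[of W W N "u i" w w] uu ww uw dinner_comm[of N w "u i"] by simp
  then have CS: "W * W \<le> Q" using dinner_self_nonneg[of N "\<lambda>k. w k - W * u i k"] by simp
  show ?thesis
  proof (cases "Q = 0")
    case True
    then have "W * W \<le> 0" using CS by simp
    then have "W = 0" by (auto simp: mult_le_0_iff)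
    then show ?thesis using True by (simp add: W_def Q_def)
  next
    case False
    then have Qp: "Q > 0" using CS by (smt (verit) zero_le_square)
    define r where "r = sqrt Q"
    have rp: "r > 0" and rr: "r * r = Q" using Qp by (auto simp: r_def)
    define z where "z = (\<lambda>k. w k / r)"
    have zz: "dinner N z z = 1"
      using ww rp rr Qp by (simp add: z_def dinner_def sum_divide_distrib[symmetric] field_simps)
    have zr: "(\<Sum>j<n. G i j * dinner N z (v j)) = r"
    proof -
      have "(\<Sum>j<n. G i j * dinner N z (v j)) = dinner N z w"
        by (simp add: w_def dinner_sum_right)
      also have "\<dots> = Q / r" using ww by (simp add: z_def dinner_def flip: sum_divide_distrib)
      finally show ?thesis using rp by (simp flip: rr)
    qed
    have st': "coord_strategy N m n (u(i := z)) v"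
      using st zz by (simp add: coord_strategy_def)
    have "coord_bias N m n G (u(i := z)) v = coord_bias N m n G u v - W + r"
      unfolding coord_bias_def W_def Wc_def
      using sum_update[OF i, of "\<lambda>x i'. \<Sum>j<n. G i' j * dinner N x (v j)" u z] zr by simp
    then have "r \<le> W" using le_quantum_bias[OF st', of G] opt by simp
    then have "0 \<le> W" "Q \<le> W * W" using rp rr by (auto simp: mult_mono)
    then show ?thesis using CS by (simp add: W_def Q_def)
  qed
qed



lemma sum_split_add: "(\<Sum>k<a+(b::nat). f k) = (\<Sum>k<a. f k) + (\<Sum>k<b. f (a+k)::real)"
  by (induction b) (auto simp: add_ac)

definition cat :: "nat \<Rightarrow> (nat \<Rightarrow> real) \<Rightarrow> (nat \<Rightarrow> real) \<Rightarrow> nat \<Rightarrow> real" where "cat N1 x y = (\<lambda>k. if k < N1 then x k / sqrt 2 else y (k - N1) / sqrt 2)"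

lemma dinner_cat: "dinner (N1+N2) (cat N1 x y) (cat N1 x' y') = (dinner N1 x x' + dinner N2 y y') / 2"
proof -
  have s2: "sqrt 2 * sqrt 2 = (2::real)" by simp
  have "dinner (N1+N2) (cat N1 x y) (cat N1 x' y') = (\<Sum>k<N1. x k * x' k / 2) + (\<Sum>k<N2. y k * y' k / 2)"
    unfolding dinner_def sum_split_add by (simp add: cat_def s2)
  then show ?thesis by (simp add: dinner_def add_divide_distrib flip: sum_divide_distrib)
qed

lemma opt_unique:
  assumes st1: "coord_strategy N1 m n u1 v1" and o1: "coord_bias N1 m n G u1 v1 = quantum_bias m n G"
    and st2: "coord_strategy N2 m n u2 v2" and o2: "coord_bias N2 m n G u2 v2 = quantum_bias m n G"
    and i: "i < m"
  shows "Wc N1 n G u1 v1 i = Wc N2 n G u2 v2 i"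
proof -
  define u3 where "u3 = (\<lambda>a. cat N1 (u1 a) (u2 a))"
  define v3 where "v3 = (\<lambda>a. cat N1 (v1 a) (v2 a))"
  have d: "dinner (N1+N2) (x3 a) (y3 b) = (dinner N1 (x1 a) (y1 b) + dinner N2 (x2 a) (y2 b)) / 2"
    if "x3 = (\<lambda>a. cat N1 (x1 a) (x2 a))" "y3 = (\<lambda>a. cat N1 (y1 a) (y2 a))" for x1 x2 x3 y1 y2 y3 a b
    using that dinner_cat by simp
  have duv: "dinner (N1+N2) (u3 a) (v3 b) = (dinner N1 (u1 a) (v1 b) + dinner N2 (u2 a) (v2 b)) / 2" for a b
    by (rule d) (simp_all add: u3_def v3_def)
  have duu: "dinner (N1+N2) (u3 a) (u3 b) = (dinner N1 (u1 a) (u1 b) + dinner N2 (u2 a) (u2 b)) / 2" for a b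
    by (rule d) (simp_all add: u3_def)
  have dvv: "dinner (N1+N2) (v3 a) (v3 b) = (dinner N1 (v1 a) (v1 b) + dinner N2 (v2 a) (v2 b)) / 2" for a b
    by (rule d) (simp_all add: v3_def)
  have st3: "coord_strategy (N1+N2) m n u3 v3"
    using st1 st2 by (simp add: coord_strategy_def duu dvv)
  have o3: "coord_bias (N1+N2) m n G u3 v3 = quantum_bias m n G"
  proof -
    have "coord_bias (N1+N2) m n G u3 v3 = (coord_bias N1 m n G u1 v1 + coord_bias N2 m n G u2 v2) / 2"
      unfolding coord_bias_def duv
      by (simp add: add_divide_distrib distrib_left sum.distrib flip: sum_divide_distrib)
    then show ?thesis using o1 o2 by simp
  qed
  have W3: "Wc (N1+N2) n G u3 v3 i = (Wc N1 n G u1 v1 i + Wc N2 n G u2 v2 i) / 2"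
    unfolding Wc_def duv by (simp add: add_divide_distrib distrib_left sum.distrib flip: sum_divide_distrib)
  have Q3: "Qc (N1+N2) n G v3 i = (Qc N1 n G v1 i + Qc N2 n G v2 i) / 2"
    unfolding Qc_def dvv by (simp add: add_divide_distrib distrib_left sum.distrib flip: sum_divide_distrib)
  note r1 = opt_WQ[OF st1 o1 i] and r2 = opt_WQ[OF st2 o2 i] and r3 = opt_WQ[OF st3 o3 i]
  define a where "a = Wc N1 n G u1 v1 i"
  define b where "b = Wc N2 n G u2 v2 i"
  have "((a + b) / 2) * ((a + b) / 2) = (a * a + b * b) / 2"
    using r1 r2 r3 W3 Q3 by (simp add: a_def b_def)
  then have "(a - b) * (a - b) = 0" by (simp add: field_simps)
  then show ?thesis by (simp add: a_def b_def)
qed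

lemma mrb_eq:
  assumes st: "coord_strategy N m n u v" and o: "coord_bias N m n G u v = quantum_bias m n G"
    and i: "i < m"
  shows "marginal_row_bias m n G i = Wc N n G u v i"
proof -
  define P where "P = (\<lambda>c. \<exists>N u v. coord_strategy N m n u v \<and>
      coord_bias N m n G u v = quantum_bias m n G \<and> c = (\<Sum>j<n. G i j * dinner N (u i) (v j)))"
  have "P (Wc N n G u v i)" unfolding P_def Wc_def using st o by blast
  then have "P (marginal_row_bias m n G i)"
    unfolding marginal_row_bias_def P_def[symmetric] by (rule someI)
  then obtain N' u' v' where st': "coord_strategy N' m n u' v'"
      and o': "coord_bias N' m n G u' v' = quantum_bias m n G"
      and c: "marginal_row_bias m n G i = Wc N' n G u' v' i"
    unfolding P_def Wc_def by blast
  show ?thesis using c opt_unique[OF st' o' st o i] by simp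
qed



lemma dinner_basis:
  assumes h: "bij_betw h {..<DIM('a)} (Basis::'a::euclidean_space set)"
  shows "dinner DIM('a) (\<lambda>k. x \<bullet> h k) (\<lambda>k. y \<bullet> h k) = x \<bullet> y"
proof -
  have "x \<bullet> y = (\<Sum>b\<in>Basis. (x \<bullet> b) * (y \<bullet> b))" by (rule euclidean_inner)
  also have "\<dots> = (\<Sum>k<DIM('a). (x \<bullet> h k) * (y \<bullet> h k))"
    by (rule sum.reindex_bij_betw[OF h, symmetric])
  finally show ?thesis by (simp add: dinner_def)
qed

theorem corollary3p2:
  fixes G :: "nat \<Rightarrow> nat \<Rightarrow> real" and m n :: nat
    and u v :: "nat \<Rightarrow> 'a::euclidean_space"
  assumes "xor_game m n G" and "no_zero_rows m n G"
    and "vec_strategy m n u v"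
  shows "optimal_strategy m n G u v \<longleftrightarrow>
    (\<forall>i<m. (\<Sum>j<n. G i j *\<^sub>R v j) = marginal_row_bias m n G i *\<^sub>R u i)"
proof -
  obtain h where h: "bij_betw h {..<DIM('a)} (Basis::'a set)"
    using ex_bij_betw_nat_finite[of "Basis::'a set"] by (auto simp: atLeast0LessThan)
  define Nd where "Nd = DIM('a)"
  define U where "U = (\<lambda>i k. u i \<bullet> h k)"
  define V where "V = (\<lambda>j k. v j \<bullet> h k)"
  have dUV: "dinner Nd (U a) (V b) = u a \<bullet> v b" for a b
    unfolding U_def V_def Nd_def by (rule dinner_basis[OF h])
  have dVV: "dinner Nd (V a) (V b) = v a \<bullet> v b" for a b
    unfolding V_def Nd_def by (rule dinner_basis[OF h])
  have dUU: "dinner Nd (U a) (U b) = u a \<bullet> u b" for a b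
    unfolding U_def Nd_def by (rule dinner_basis[OF h])
  have uu: "u i \<bullet> u i = 1" if "i < m" for i
    using assms(3) that by (metis vec_strategy_def power2_norm_eq_inner one_power2)
  have vv: "v j \<bullet> v j = 1" if "j < n" for j
    using assms(3) that by (metis vec_strategy_def power2_norm_eq_inner one_power2)
  have stc: "coord_strategy Nd m n U V"
    using uu vv by (simp add: coord_strategy_def dUU dVV)
  have biasc: "coord_bias Nd m n G U V = bias m n G u v"
    by (simp add: coord_bias_def bias_def dUV)
  define w where "w = (\<lambda>i. \<Sum>j<n. G i j *\<^sub>R v j)"
  have Wcw: "Wc Nd n G U V i = u i \<bullet> w i" for i
    by (simp add: Wc_def dUV w_def inner_sum_right)
  have Qcw: "Qc Nd n G V i = w i \<bullet> w i" for i
    apply (simp add: Qc_def dVV w_def inner_sum_right inner_sum_left sum_distrib_left mult.assoc)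
    apply (subst sum.swap)
    apply (simp add: inner_commute mult.left_commute)
    done
  have bias_w: "bias m n G u v = (\<Sum>i<m. u i \<bullet> w i)"
    by (simp add: bias_def w_def inner_sum_right)
  show ?thesis
  proof
    assume opt: "optimal_strategy m n G u v"
    then have oc: "coord_bias Nd m n G U V = quantum_bias m n G"
      using biasc by (simp add: optimal_strategy_def)
    show "\<forall>i<m. (\<Sum>j<n. G i j *\<^sub>R v j) = marginal_row_bias m n G i *\<^sub>R u i"
    proof (intro allI impI)
      fix i assume i: "i < m"
      define c where "c = marginal_row_bias m n G i"
      have c: "c = u i \<bullet> w i" using mrb_eq[OF stc oc i] Wcw by (simp add: c_def)
      have cc: "c * c = w i \<bullet> w i" using opt_WQ[OF stc oc i] Wcw Qcw c by simp
      have "(w i - c *\<^sub>R u i) \<bullet> (w i - c *\<^sub>R u i) = 0"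
        using c cc uu[OF i] by (simp add: inner_diff_left inner_diff_right inner_commute algebra_simps)
      then have "w i = c *\<^sub>R u i" by simp
      then show "(\<Sum>j<n. G i j *\<^sub>R v j) = marginal_row_bias m n G i *\<^sub>R u i"
        by (simp add: w_def c_def)
    qed
  next
    assume rhs: "\<forall>i<m. (\<Sum>j<n. G i j *\<^sub>R v j) = marginal_row_bias m n G i *\<^sub>R u i"
    obtain N' u' v' where st': "coord_strategy N' m n u' v'"
      and o': "coord_bias N' m n G u' v' = quantum_bias m n G"
      using attain by blast
    have "quantum_bias m n G = (\<Sum>i<m. Wc N' n G u' v' i)"
      using o' by (simp add: coord_bias_def Wc_def)
    also have "\<dots> = (\<Sum>i<m. marginal_row_bias m n G i)"
      by (rule sum.cong) (simp_all add: mrb_eq[OF st' o'])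
    also have "\<dots> = (\<Sum>i<m. u i \<bullet> w i)"
      by (rule sum.cong) (simp_all add: rhs w_def uu)
    finally show "optimal_strategy m n G u v"
      using assms(3) bias_w by (simp add: optimal_strategy_def)
  qed
qed


end
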